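(* Let $K=K_0\supset K_1\supset K_2\supset\cdots$ be a module with a decreasing filtration by submodules (with the convention $K_q=K_0$ for $q<0$), and for each integer $r\ge -1$ let $\partial_r:K\to K$ be a linear map with $\partial_r(K_p)\subset K_p$ for all $p$, $\partial_{-1}=0$, and $\partial_r\circ\partial_s=0$ for all $r,s\ge -1$. For $r\ge -1$ and integers $p$ put $Z^r_p=\{x\in K_p:\ \partial_r x\in K_{p+r}\}$. Assume the following property: for all $r\ge 0$ and all $p$, if $x\in Z^r_p$ or $x\in Z^{r-1}_p$, then $\partial_r x-\partial_{r-1}x\in Z^{r-1}_{p+r}$. For $r\ge 0$ define $$E^r_p=Z^r_p\big/\bigl(\partial_{r-1}Z^{r-1}_{p-r+1}+Z^{r-1}_{p+1}\bigr),\qquad E^r_\cdot=\bigoplus_p E^r_p .$$ Then for every $r\ge 0$ there is a differential $d^r$ on the graded module $E^r_\cdot$, induced by $\partial_r$ and mapping $E^r_p$ to $E^r_{p+r}$, such that the cohomology $H(E^r_\cdot)$ (in degree $p$: $\ker d^r_p/\operatorname{im} d^r_{p-r}$) is canonically isomorphic to $E^{r+1}_\cdot$ (degree by degree, $H^p(E^r_\cdot)\cong E^{r+1}_p$).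
   Context: The maps $\partial_r$ play the role of varying boundary operators converging in the filtration topology; the denominators in the definition of $E^r_p$ are submodules of $Z^r_p$ under the stated assumptions. *)

theory Defs
  imports Complex_Main "HOL-Library.Set_Algebras"
begin

definition quot :: "'b::plus set \<Rightarrow> 'b set \<Rightarrow> 'b set set" where
  "quot M N = (\<lambda>x. x +o N) ` M"

definition Zset :: "(int \<Rightarrow> 'a::ab_group_add set) \<Rightarrow> (int \<Rightarrow> 'a \<Rightarrow> 'a) \<Rightarrow> int \<Rightarrow> int \<Rightarrow> 'a set" where
  "Zset F D r p = {x \<in> F p. D r x \<in> F (p + r)}"

definition Den :: "(int \<Rightarrow> 'a::ab_group_add set) \<Rightarrow> (int \<Rightarrow> 'a \<Rightarrow> 'a) \<Rightarrow> int \<Rightarrow> int \<Rightarrow> 'a set" where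
  "Den F D r p = D (r - 1) ` Zset F D (r - 1) (p - r + 1) + Zset F D (r - 1) (p + 1)"

definition Eset :: "(int \<Rightarrow> 'a::ab_group_add set) \<Rightarrow> (int \<Rightarrow> 'a \<Rightarrow> 'a) \<Rightarrow> int \<Rightarrow> int \<Rightarrow> 'a set set" where
  "Eset F D r p = quot (Zset F D r p) (Den F D r p)"

text \<open>Cohomology in degree p of a complex (E_p, d_p: E_p \<rightarrow> E_(p+r)) whose
  zero element in degree q is the coset zero q (= the denominator itself):
  ker d_p / im d_(p-r).\<close>
definition cohom :: "(int \<Rightarrow> 'a::ab_group_add set set) \<Rightarrow> (int \<Rightarrow> 'a set) \<Rightarrow> (int \<Rightarrow> 'a set \<Rightarrow> 'a set)
    \<Rightarrow> int \<Rightarrow> int \<Rightarrow> 'a set set set" where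
  "cohom E zero d r p =
     quot {A \<in> E p. d p A = zero (p + r)} (d (p - r) ` E (p - r))"

end

theory Submission
  imports Defs
begin

definition grp :: "'a::ab_group_add set \<Rightarrow> bool" where
  "grp S \<longleftrightarrow> 0 \<in> S \<and> (\<forall>x\<in>S. \<forall>y\<in>S. x - y \<in> S)"

lemma grp_0: "grp S \<Longrightarrow> 0 \<in> S" by (simp add: grp_def)
lemma grp_diff: "grp S \<Longrightarrow> x \<in> S \<Longrightarrow> y \<in> S \<Longrightarrow> x - y \<in> S" by (simp add: grp_def)
lemma grp_neg: "grp S \<Longrightarrow> x \<in> S \<Longrightarrow> - x \<in> S"
  using grp_diff[of S 0 x] grp_0 by auto
lemma grp_add: "grp S \<Longrightarrow> x \<in> S \<Longrightarrow> y \<in> S \<Longrightarrow> x + y \<in> S"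
  using grp_diff[of S x "- y"] grp_neg by fastforce

lemma grp_image: assumes g: "grp S" and f: "\<And>x y. f (x - y) = f x - f y" shows "grp (f ` S)"
  unfolding grp_def
proof safe
  have "f 0 = 0" using f[of 0 0] by simp
  then show "0 \<in> f ` S" using grp_0[OF g] by (metis image_eqI)
next
  fix x y assume "x \<in> S" "y \<in> S"
  then have "x - y \<in> S" using grp_diff[OF g] by blast
  then show "f x - f y \<in> f ` S" unfolding f[symmetric] by (rule imageI)
qed

lemma grp_sum: assumes "grp A" "grp B" shows "grp (A + B)"
  unfolding grp_def
proof safe
  show "0 \<in> A + B" using grp_0[OF assms(1)] grp_0[OF assms(2)] set_plus_intro[of 0 A 0 B] by simp
next
  fix x y assume "x \<in> A + B" "y \<in> A + B"
  then obtain a b a' b' where "a \<in> A" "b \<in> B" "a' \<in> A" "b' \<in> B" "x = a + b" "y = a' + b'"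
    by (auto elim!: set_plus_elim)
  then have "x - y = (a - a') + (b - b')" by simp
  then show "x - y \<in> A + B" using grp_diff assms \<open>a \<in> A\<close> \<open>b \<in> B\<close> \<open>a' \<in> A\<close> \<open>b' \<in> B\<close>
    by (metis set_plus_intro)
qed

lemma coset_eq: "grp N \<Longrightarrow> (x +o N = y +o N) \<longleftrightarrow> x - y \<in> N"
proof
  assume g: "grp N" and e: "x +o N = y +o N"
  have "x \<in> x +o N" using grp_0[OF g] set_plus_intro2[of 0 N x] by simp
  then show "x - y \<in> N" using e set_plus_imp_minus by metis
next
  assume g: "grp N" and m: "x - y \<in> N"
  show "x +o N = y +o N"
  proof
    show "x +o N \<subseteq> y +o N"
    proof
      fix z assume "z \<in> x +o N"
      then have "z - x \<in> N" by (rule set_plus_imp_minus)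
      then have "(z - x) + (x - y) \<in> N" using grp_add[OF g] m by blast
      then show "z \<in> y +o N" by (intro set_minus_imp_plus) simp
    qed
  next
    show "y +o N \<subseteq> x +o N"
    proof
      fix z assume "z \<in> y +o N"
      then have "z - y \<in> N" by (rule set_plus_imp_minus)
      then have "(z - y) - (x - y) \<in> N" using grp_diff[OF g] m by blast
      then show "z \<in> x +o N" by (intro set_minus_imp_plus) simp
    qed
  qed
qed

lemma coset_self: "grp N \<Longrightarrow> x \<in> x +o N"
  using grp_0 set_plus_intro2[of 0 N x] by fastforce

lemma coset_zero: "grp N \<Longrightarrow> x \<in> N \<Longrightarrow> x +o N = N"
  using coset_eq[of N x 0] by simp

lemma grp_plus_self: "grp N \<Longrightarrow> N + N = N"
proof
  assume g: "grp N"
  show "N + N \<subseteq> N" using grp_add[OF g] by (auto elim!: set_plus_elim)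
  show "N \<subseteq> N + N" using set_zero_plus2[OF grp_0[OF g]] .
qed

lemma coset_plus: "grp N \<Longrightarrow> (x +o N) + (y +o N) = (x + y) +o N"
  by (simp add: set_plus_rearrange grp_plus_self)

lemma cohom_eq:
  assumes gN: "grp N" and gM: "grp M"
  shows "((x +o N) +o ((\<lambda>m. m +o N) ` M) = (y +o N) +o ((\<lambda>m. m +o N) ` M))
         \<longleftrightarrow> x - y \<in> M + N"
proof -
  have cs: "(a +o N) +o ((\<lambda>m. m +o N) ` M) = (\<lambda>m. (a + m) +o N) ` M" for a
  proof -
    have g: "c +o (h ` M) = (\<lambda>m. c + h m) ` M" for c :: "'a set" and h :: "'a \<Rightarrow> 'a set"
      unfolding elt_set_plus_def by auto
    show ?thesis unfolding g coset_plus[OF gN] ..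
  qed
  show ?thesis
  proof
    assume "((x +o N) +o ((\<lambda>m. m +o N) ` M) = (y +o N) +o ((\<lambda>m. m +o N) ` M))"
    then have e: "(\<lambda>m. (x + m) +o N) ` M = (\<lambda>m. (y + m) +o N) ` M" by (simp add: cs)
    have "(x + 0) +o N \<in> (\<lambda>m. (x + m) +o N) ` M" using grp_0[OF gM] by blast
    then obtain m where m: "m \<in> M" "x +o N = (y + m) +o N" using e by auto
    then have "x - (y + m) \<in> N" using coset_eq[OF gN] by blast
    then have "x - y = m + (x - (y + m))" by simp
    then show "x - y \<in> M + N" using m \<open>x - (y + m) \<in> N\<close> by (metis set_plus_intro)
  next
    assume "x - y \<in> M + N"
    then obtain m0 n0 where mn: "m0 \<in> M" "n0 \<in> N" "x - y = m0 + n0" by (auto elim!: set_plus_elim)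
    have xe: "x = m0 + n0 + y" using mn(3) by (metis diff_add_cancel)
    have "(\<lambda>m. (x + m) +o N) ` M = (\<lambda>m. (y + m) +o N) ` M"
    proof (intro equalityI subsetI)
      fix A assume "A \<in> (\<lambda>m. (x + m) +o N) ` M"
      then obtain m where "m \<in> M" "A = (x + m) +o N" by auto
      moreover have "(x + m) +o N = (y + (m + m0)) +o N"
      proof -
        have "(x + m) - (y + (m + m0)) = n0" unfolding xe by (simp add: algebra_simps)
        then show ?thesis using coset_eq[OF gN, of "x+m" "y+(m+m0)"] mn(2) by simp
      qed
      moreover have "m + m0 \<in> M" using grp_add[OF gM] \<open>m \<in> M\<close> mn by blast
      ultimately show "A \<in> (\<lambda>m. (y + m) +o N) ` M" by (intro image_eqI[of _ _ "m+m0"]) simp_all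
    next
      fix A assume "A \<in> (\<lambda>m. (y + m) +o N) ` M"
      then obtain m where "m \<in> M" "A = (y + m) +o N" by auto
      moreover have "(y + m) +o N = (x + (m - m0)) +o N"
      proof -
        have "(y + m) - (x + (m - m0)) = - n0" unfolding xe by (simp add: algebra_simps)
        then show ?thesis using coset_eq[OF gN, of "y+m" "x+(m-m0)"] grp_neg[OF gN mn(2)] by simp
      qed
      moreover have "m - m0 \<in> M" using grp_diff[OF gM] \<open>m \<in> M\<close> mn by blast
      ultimately show "A \<in> (\<lambda>m. (x + m) +o N) ` M" by (intro image_eqI[of _ _ "m-m0"]) simp_all
    qed
    then show "((x +o N) +o ((\<lambda>m. m +o N) ` M) = (y +o N) +o ((\<lambda>m. m +o N) ` M))" by (simp add: cs)
  qed
qed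

lemma Fmono_aux:
  fixes F :: "int \<Rightarrow> 'a set"
  assumes decr: "\<And>q. F (q + 1) \<subseteq> F q"
  shows "F (p + int n) \<subseteq> F p"
proof (induction n)
  case 0 show ?case by simp
next
  case (Suc n)
  have "F (p + int (Suc n)) = F ((p + int n) + 1)" by (simp add: ac_simps)
  then show ?case using decr[of "p + int n"] Suc by auto
qed

lemma Fmono:
  fixes F :: "int \<Rightarrow> 'a set"
  assumes decr: "\<And>q. F (q + 1) \<subseteq> F q" and "p \<le> q"
  shows "F q \<subseteq> F p"
proof -
  have "q = p + int (nat (q - p))" using assms(2) by simp
  then show ?thesis using Fmono_aux[of F p "nat (q - p)"] decr by metis
qed

theorem mainTheorem4:
  fixes scale :: "'r::comm_ring_1 \<Rightarrow> 'a::ab_group_add \<Rightarrow> 'a"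
    and F :: "int \<Rightarrow> 'a set"
    and D :: "int \<Rightarrow> 'a \<Rightarrow> 'a"
  assumes mod: "module scale"
    and sub: "\<And>q. module.subspace scale (F q)"
    and neg: "\<And>q. q \<le> 0 \<Longrightarrow> F q = UNIV"
    and decr: "\<And>q. F (q + 1) \<subseteq> F q"
    and lin: "\<And>r. r \<ge> -1 \<Longrightarrow> module_hom scale scale (D r)"
    and pres: "\<And>r p. r \<ge> -1 \<Longrightarrow> D r ` F p \<subseteq> F p"
    and Dm1: "\<And>x. D (-1) x = 0"
    and DD: "\<And>r s x. r \<ge> -1 \<Longrightarrow> s \<ge> -1 \<Longrightarrow> D r (D s x) = 0"
    and hyp: "\<And>r p x. r \<ge> 0 \<Longrightarrow> x \<in> Zset F D r p \<or> x \<in> Zset F D (r - 1) p \<Longrightarrow>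
                 D r x - D (r - 1) x \<in> Zset F D (r - 1) (p + r)"
    and r: "r \<ge> 0"
  shows "\<exists>d :: int \<Rightarrow> 'a set \<Rightarrow> 'a set.
           (\<forall>p. \<forall>x \<in> Zset F D r p.
               d p (x +o Den F D r p) = D r x +o Den F D r (p + r)) \<and>
           (\<forall>p. d p ` Eset F D r p \<subseteq> Eset F D r (p + r)) \<and>
           (\<forall>p. \<forall>A \<in> Eset F D r p. d (p + r) (d p A) = Den F D r (p + r + r)) \<and>
           (\<forall>p. \<exists>\<Phi>.
               (\<forall>x \<in> Zset F D (r + 1) p.
                  \<Phi> (x +o Den F D (r + 1) p) = (x +o Den F D r p) +o (d (p - r) ` Eset F D r (p - r))) \<and>
               bij_betw \<Phi> (Eset F D (r + 1) p) (cohom (Eset F D r) (Den F D r) d r p))"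
proof -
  have Fm: "x \<in> F p" if "x \<in> F q" "p \<le> q" for x p q using Fmono[of F p q] decr that by blast
  have Fg: "grp (F q)" for q
    using module.subspace_0[OF mod sub] module.subspace_diff[OF mod sub] unfolding grp_def by blast
  have Dd: "D k (x - y) = D k x - D k y" if "k \<ge> -1" for k x y using module_hom.diff[OF lin[OF that]] .
  have Da: "D k (x + y) = D k x + D k y" if "k \<ge> -1" for k x y using module_hom.add[OF lin[OF that]] .
  have D0: "D k 0 = 0" if "k \<ge> -1" for k using Dd[OF that, of 0 0] by simp
  have Zg: "grp (Zset F D k p)" if "k \<ge> -1" for k p
    unfolding grp_def Zset_def using grp_0[OF Fg] grp_diff[OF Fg] Dd[OF that] D0[OF that] by auto
  have ZF: "x \<in> F p" if "x \<in> Zset F D k p" for x k p using that by (simp add: Zset_def)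
  have ZD: "D k x \<in> F (p + k)" if "x \<in> Zset F D k p" for x k p using that by (simp add: Zset_def)
  have ZI: "x \<in> Zset F D k p" if "x \<in> F p" "D k x \<in> F (p + k)" for x k p using that by (simp add: Zset_def)
  have Zdown: "x \<in> Zset F D (k - 1) p" if k: "k \<ge> 0" and x: "x \<in> Zset F D k p" for x k p
  proof -
    have h: "D k x - D (k - 1) x \<in> F (p + k)" using hyp[OF k] x ZF by blast
    have "D k x \<in> F (p + k)" using ZD[OF x] .
    then have "D k x - (D k x - D (k - 1) x) \<in> F (p + k)" using grp_diff[OF Fg _ h] by blast
    then have "D (k - 1) x \<in> F (p + k)" by simp
    then have "D (k - 1) x \<in> F (p + (k - 1))" using Fm by simp
    then show ?thesis using ZI ZF[OF x] by blast
  qed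
  have DZ: "D k x \<in> Zset F D j (p + k)" if "k \<ge> -1" "j \<ge> -1" "x \<in> Zset F D k p" for x k j p
    using ZI[OF ZD[OF that(3)]] DD[OF that(2) that(1)] grp_0[OF Fg] by simp
  have Denmem: "y \<in> Den F D k p \<longleftrightarrow> (\<exists>z u. z \<in> Zset F D (k-1) (p-k+1) \<and> u \<in> Zset F D (k-1) (p+1) \<and> y = D (k-1) z + u)"
    for y k p unfolding Den_def set_plus_def by blast
  have Dg: "grp (Den F D k p)" if "k \<ge> 0" for k p
    unfolding Den_def using that by (intro grp_sum grp_image Zg Dd) auto
  have Nin: "u \<in> Den F D k p" if "k \<ge> 0" "u \<in> Zset F D (k-1) (p+1)" for u k p
    unfolding Denmem using that grp_0[OF Zg] D0 by (intro exI[of _ 0] exI[of _ u]) auto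

  have DenZ: "y \<in> Zset F D k p" if k: "k \<ge> 0" and y: "y \<in> Den F D k p" for y k p
  proof -
    obtain z u where z: "z \<in> Zset F D (k-1) (p-k+1)" and u: "u \<in> Zset F D (k-1) (p+1)"
      and ye: "y = D (k-1) z + u" using y unfolding Denmem by blast
    have "D (k-1) z \<in> Zset F D k (p - k + 1 + (k - 1))" using DZ[OF _ _ z] k by simp
    then have a: "D (k-1) z \<in> Zset F D k p" by simp
    have e: "D k u - D (k-1) u \<in> F (p + 1 + k)" using hyp[OF k, of u "p+1"] u ZF by blast
    have "D (k-1) u \<in> F (p + 1 + (k - 1))" using ZD[OF u] .
    then have e2: "D (k-1) u \<in> F (p + k)" by simp
    have "(D k u - D (k-1) u) + D (k-1) u \<in> F (p + k)"
      using grp_add[OF Fg Fm[OF e] e2] by simp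
    then have "D k u \<in> F (p + k)" by simp
    moreover have "u \<in> F p" using Fm[OF ZF[OF u]] by simp
    ultimately have "u \<in> Zset F D k p" using ZI by blast
    then show ?thesis using ye grp_add[OF Zg a] k by simp
  qed
  have r1: "r \<ge> -1" using r by simp
  have hr: "D r x - D (r - 1) x \<in> Zset F D (r - 1) (p + r)"
    if "x \<in> Zset F D r p \<or> x \<in> Zset F D (r - 1) p" for x p using hyp[OF r that] .
  have hr1: "D (r+1) x - D r x \<in> Zset F D r (p + r + 1)"
    if "x \<in> Zset F D (r+1) p \<or> x \<in> Zset F D r p" for x p
    using hyp[of "r+1" x p] that r by (simp add: ac_simps)
  have DrDen: "D r y \<in> Den F D r (p + r)" if y: "y \<in> Den F D r p" for y p
  proof -
    obtain z u where z: "z \<in> Zset F D (r-1) (p-r+1)" and u: "u \<in> Zset F D (r-1) (p+1)"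
      and ye: "y = D (r-1) z + u" using y unfolding Denmem by blast
    have "D r y = D r u" using ye Da[OF r1] DD[OF r1, of "r-1"] r by simp
    also have "\<dots> = D (r-1) u + (D r u - D (r-1) u)" by simp
    finally have eq: "D r y = D (r-1) u + (D r u - D (r-1) u)" .
    have "D r u - D (r-1) u \<in> Zset F D (r-1) (p + 1 + r)" using hr u by blast
    then have e: "D r u - D (r-1) u \<in> Zset F D (r-1) (p + r + 1)" by (simp add: ac_simps)
    have u': "u \<in> Zset F D (r-1) (p + r - r + 1)" using u by simp
    show ?thesis unfolding Denmem using eq e u' by blast
  qed
  define d where "d = (\<lambda>p (A::'a set). D r (SOME x. x \<in> A) +o Den F D r (p + r))"
  have dx: "d p (x +o Den F D r p) = D r x +o Den F D r (p + r)" for x p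
  proof -
    let ?x = "SOME x'. x' \<in> x +o Den F D r p"
    have "?x \<in> x +o Den F D r p" using coset_self[OF Dg[OF r]] by (rule someI)
    then have "?x - x \<in> Den F D r p" by (rule set_plus_imp_minus)
    then have "D r (?x - x) \<in> Den F D r (p + r)" by (rule DrDen)
    then have "D r ?x - D r x \<in> Den F D r (p + r)" using Dd[OF r1] by simp
    then show ?thesis unfolding d_def using coset_eq[OF Dg[OF r]] by blast
  qed
  have Emem: "A \<in> Eset F D k p \<longleftrightarrow> (\<exists>x \<in> Zset F D k p. A = x +o Den F D k p)" for A k p
    unfolding Eset_def quot_def by blast
  have part1: "\<forall>p. \<forall>x \<in> Zset F D r p. d p (x +o Den F D r p) = D r x +o Den F D r (p + r)"
    using dx by blast
  have part2: "\<forall>p. d p ` Eset F D r p \<subseteq> Eset F D r (p + r)"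
  proof (intro allI subsetI)
    fix p B assume "B \<in> d p ` Eset F D r p"
    then obtain A where A: "A \<in> Eset F D r p" and BA: "B = d p A" by blast
    then obtain x where x: "x \<in> Zset F D r p" and B: "B = d p (x +o Den F D r p)"
      unfolding Emem by blast
    have "D r x \<in> Zset F D r (p + r)" using DZ[OF r1 r1 x] .
    then show "B \<in> Eset F D r (p + r)" unfolding B dx Emem by blast
  qed
  have part3: "\<forall>p. \<forall>A \<in> Eset F D r p. d (p + r) (d p A) = Den F D r (p + r + r)"
  proof (intro allI ballI)
    fix p A assume "A \<in> Eset F D r p"
    then obtain x where x: "x \<in> Zset F D r p" and A: "A = x +o Den F D r p"
      unfolding Emem by blast
    show "d (p + r) (d p A) = Den F D r (p + r + r)"
      unfolding A dx using DD[OF r1 r1] by simp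
  qed
  have part4: "\<exists>\<Phi>.
               (\<forall>x \<in> Zset F D (r + 1) p.
                  \<Phi> (x +o Den F D (r + 1) p) = (x +o Den F D r p) +o (d (p - r) ` Eset F D r (p - r))) \<and>
               bij_betw \<Phi> (Eset F D (r + 1) p) (cohom (Eset F D r) (Den F D r) d r p)" for p
  proof -
    define N where "N = Den F D r p"
    define M where "M = D r ` Zset F D r (p - r)"
    have gN: "grp N" unfolding N_def using Dg[OF r] .
    have gM: "grp M" unfolding M_def using grp_image[OF Zg[OF r1] Dd[OF r1]] .
    have Im: "d (p - r) ` Eset F D r (p - r) = (\<lambda>m. m +o N) ` M"
    proof -
      have "Eset F D r (p - r) = (\<lambda>x. x +o Den F D r (p - r)) ` Zset F D r (p - r)"
        unfolding Eset_def quot_def ..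
      then show ?thesis unfolding M_def N_def by (simp add: image_image dx)
    qed
    have stepB: "y \<in> M + N" if y: "y \<in> Den F D (r + 1) p" for y
    proof -
      obtain z u where z: "z \<in> Zset F D (r+1-1) (p-(r+1)+1)" and u: "u \<in> Zset F D (r+1-1) (p+1)"
        and ye: "y = D (r+1-1) z + u" using y unfolding Denmem by blast
      have "D r z \<in> M" using z unfolding M_def by simp
      moreover have "u \<in> N" unfolding N_def using Nin[OF r] Zdown[OF r] u by simp
      ultimately show ?thesis using ye by (simp add: set_plus_intro)
    qed
    have stepC: "x \<in> Den F D (r + 1) p" if x1: "x \<in> Zset F D (r + 1) p" and xMN: "x \<in> M + N" for x
    proof -
      obtain m y where m: "m \<in> M" and y: "y \<in> N" and xe: "x = m + y"
        using xMN by (auto elim!: set_plus_elim)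
      obtain w where w: "w \<in> Zset F D r (p - r)" and mw: "m = D r w" using m unfolding M_def by blast
      obtain z u where z: "z \<in> Zset F D (r-1) (p-r+1)" and u: "u \<in> Zset F D (r-1) (p+1)"
        and ye: "y = D (r-1) z + u" using y unfolding Denmem N_def by blast
      define e where "e = D r z - D (r-1) z"
      have "e \<in> Zset F D (r-1) (p - r + 1 + r)" unfolding e_def using hr z by blast
      then have e: "e \<in> Zset F D (r-1) (p + 1)" by simp
      have "D (r-1) z \<in> F (p - r + 1 + (r - 1))" using ZD[OF z] .
      then have a: "D (r-1) z \<in> F p" by simp
      have "D (r-1) z + e \<in> F p" using grp_add[OF Fg a Fm[OF ZF[OF e]]] by simp
      then have "D r z \<in> F (p - r + r)" unfolding e_def by simp
      moreover have "z \<in> F (p - r)" using Fm[OF ZF[OF z]] by simp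
      ultimately have zr: "z \<in> Zset F D r (p - r)" using ZI by blast
      define v where "v = u - e"
      have v1: "v \<in> Zset F D (r-1) (p+1)" unfolding v_def using grp_diff[OF Zg u e] r by simp
      have wz: "w + z \<in> Zset F D r (p - r)" using grp_add[OF Zg[OF r1] w zr] .
      have "D r (w + z) \<in> Zset F D (r+1) (p - r + r)" using DZ[OF r1 _ wz] r by simp
      then have Dwz: "D r (w + z) \<in> Zset F D (r+1) p" by simp
      have xe2: "x = D r (w + z) + v"
        unfolding xe mw ye v_def e_def using Da[OF r1] by (simp add: algebra_simps)
      have "v = x - D r (w + z)" using xe2 by simp
      then have v2: "v \<in> Zset F D (r+1) p" using grp_diff[OF Zg x1 Dwz] r by simp
      have h: "D (r+1) v - D r v \<in> F (p + r + 1)" using hr1 v2 ZF by blast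
      have "D (r+1) v \<in> F (p + (r + 1))" using ZD[OF v2] .
      then have "D (r+1) v \<in> F (p + r + 1)" by (simp add: ac_simps)
      then have "D (r+1) v - (D (r+1) v - D r v) \<in> F (p + r + 1)" using grp_diff[OF Fg _ h] by blast
      then have "D r v \<in> F (p + 1 + r)" by (simp add: ac_simps)
      then have vr: "v \<in> Zset F D r (p + 1)" using ZI ZF[OF v1] by blast
      have wz': "w + z \<in> Zset F D (r+1-1) (p-(r+1)+1)" using wz by simp
      have vr': "v \<in> Zset F D (r+1-1) (p+1)" using vr by simp
      have xe3: "x = D (r+1-1) (w + z) + v" using xe2 by simp
      show ?thesis unfolding Denmem using wz' vr' xe3 by blast
    qed
    have stepD: "\<exists>x' \<in> Zset F D (r + 1) p. x - x' \<in> N"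
      if x: "x \<in> Zset F D r p" and Dx: "D r x \<in> Den F D r (p + r)" for x
    proof -
      obtain z u where z0: "z \<in> Zset F D (r-1) (p+r-r+1)" and u: "u \<in> Zset F D (r-1) (p+r+1)"
        and De: "D r x = D (r-1) z + u" using Dx unfolding Denmem by blast
      have z: "z \<in> Zset F D (r-1) (p+1)" using z0 by simp
      have zN: "z \<in> N" unfolding N_def using Nin[OF r z] .
      define e where "e = D r z - D (r-1) z"
      have "e \<in> Zset F D (r-1) (p + 1 + r)" unfolding e_def using hr z by blast
      then have e: "e \<in> F (p + r + 1)" using ZF by (simp add: ac_simps)
      have "D (r-1) z \<in> F (p + 1 + (r - 1))" using ZD[OF z] .
      then have a: "D (r-1) z \<in> F (p + r)" by simp
      have "D (r-1) z + e \<in> F (p + r)" using grp_add[OF Fg a Fm[OF e]] by simp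
      then have "D r z \<in> F (p + r)" unfolding e_def by simp
      moreover have "z \<in> F p" using Fm[OF ZF[OF z]] by simp
      ultimately have zr: "z \<in> Zset F D r p" using ZI by blast
      define a1 where "a1 = D (r+1) x - D r x"
      define a2 where "a2 = D (r+1) z - D r z"
      have a1: "a1 \<in> F (p + r + 1)" unfolding a1_def using hr1 x ZF by blast
      have a2: "a2 \<in> F (p + r + 1)" unfolding a2_def using hr1 zr ZF by blast
      have uF: "u \<in> F (p + r + 1)" using ZF[OF u] .
      have s: "a1 - a2 + u - e \<in> F (p + r + 1)"
        using grp_diff[OF Fg grp_add[OF Fg grp_diff[OF Fg a1 a2] uF] e] .
      have r1': "r + 1 \<ge> -1" using r by simp
      have "D (r+1) (x - z) = a1 - a2 + u - e"
        unfolding a1_def a2_def e_def Dd[OF r1'] using De by (simp add: algebra_simps)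
      then have "D (r+1) (x - z) \<in> F (p + (r + 1))" using s by (simp add: ac_simps)
      moreover have "x - z \<in> F p" using grp_diff[OF Fg ZF[OF x] ZF[OF zr]] .
      ultimately have "x - z \<in> Zset F D (r+1) p" using ZI by blast
      then show ?thesis using zN by (intro bexI[of _ "x - z"]) simp_all
    qed
    have A1: "x \<in> Zset F D r p" if "x \<in> Zset F D (r+1) p" for x
      using Zdown[of "r+1" x p] that r by simp
    have A2: "D r x \<in> Den F D r (p + r)" if x: "x \<in> Zset F D (r+1) p" for x
    proof -
      have h: "D (r+1) x - D r x \<in> Zset F D r (p + r + 1)" using hr1 x by blast
      have "D (r+1) x \<in> Zset F D (r-1) (p + (r + 1))" using DZ[OF _ _ x] r by simp
      then have h2: "D (r+1) x \<in> Zset F D (r-1) (p + r + 1)" by (simp add: ac_simps)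
      have "D (r+1) x - (D (r+1) x - D r x) \<in> Zset F D (r-1) (p + r + 1)"
        using grp_diff[OF Zg h2 Zdown[OF r h]] r by simp
      then show ?thesis using Nin[OF r] by simp
    qed
    define \<Phi> where "\<Phi> = (\<lambda>S. ((SOME x. x \<in> S) +o N) +o ((\<lambda>m. m +o N) ` M))"
    have \<Phi>x: "\<Phi> (x +o Den F D (r + 1) p) = (x +o N) +o ((\<lambda>m. m +o N) ` M)" for x
    proof -
      let ?x = "SOME x'. x' \<in> x +o Den F D (r + 1) p"
      have "x \<in> x +o Den F D (r + 1) p" using coset_self[OF Dg[of "r+1"]] r by simp
      then have "?x \<in> x +o Den F D (r + 1) p" by (rule someI)
      then have "?x - x \<in> Den F D (r + 1) p" by (rule set_plus_imp_minus)
      then have "?x - x \<in> M + N" by (rule stepB)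
      then show ?thesis unfolding \<Phi>_def by (rule iffD2[OF cohom_eq[OF gN gM]])
    qed
    have coh: "cohom (Eset F D r) (Den F D r) d r p =
       (\<lambda>A. A +o ((\<lambda>m. m +o N) ` M)) ` {A \<in> Eset F D r p. d p A = Den F D r (p + r)}"
      unfolding cohom_def quot_def Im ..
    have bij: "bij_betw \<Phi> (Eset F D (r + 1) p) (cohom (Eset F D r) (Den F D r) d r p)"
      unfolding bij_betw_def coh
    proof safe
      show "inj_on \<Phi> (Eset F D (r + 1) p)"
      proof (rule inj_onI)
        fix S S' assume S: "S \<in> Eset F D (r + 1) p" and S': "S' \<in> Eset F D (r + 1) p"
          and eq: "\<Phi> S = \<Phi> S'"
        obtain x where x: "x \<in> Zset F D (r+1) p" and Sx: "S = x +o Den F D (r + 1) p"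
          using S unfolding Emem by blast
        obtain x' where x': "x' \<in> Zset F D (r+1) p" and Sx': "S' = x' +o Den F D (r + 1) p"
          using S' unfolding Emem by blast
        have "x - x' \<in> M + N" using eq unfolding Sx Sx' \<Phi>x cohom_eq[OF gN gM] .
        moreover have "x - x' \<in> Zset F D (r+1) p" using grp_diff[OF Zg x x'] r by simp
        ultimately have "x - x' \<in> Den F D (r + 1) p" using stepC by blast
        then show "S = S'" unfolding Sx Sx' using coset_eq[OF Dg] r by simp
      qed
    next
      fix S assume S: "S \<in> Eset F D (r + 1) p"
      obtain x where x: "x \<in> Zset F D (r+1) p" and Sx: "S = x +o Den F D (r + 1) p"
        using S unfolding Emem by blast
      have "x +o N \<in> Eset F D r p" unfolding Emem N_def using A1[OF x] by blast
      moreover have "d p (x +o N) = Den F D r (p + r)"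
        unfolding N_def dx using coset_zero[OF Dg[OF r] A2[OF x]] .
      ultimately show "\<Phi> S \<in> (\<lambda>A. A +o ((\<lambda>m. m +o N) ` M)) ` {A \<in> Eset F D r p. d p A = Den F D r (p + r)}"
        unfolding Sx \<Phi>x by blast
    next
      fix A assume A: "A \<in> Eset F D r p" and dA: "d p A = Den F D r (p + r)"
      obtain x where x: "x \<in> Zset F D r p" and Ax: "A = x +o N"
        using A unfolding Emem N_def by blast
      have "D r x +o Den F D r (p + r) = 0 +o Den F D r (p + r)" using dA unfolding Ax N_def dx by simp
      then have "D r x \<in> Den F D r (p + r)" using coset_eq[OF Dg[OF r], of "D r x" "p + r" 0] by simp
      then obtain x' where x': "x' \<in> Zset F D (r + 1) p" and xx': "x - x' \<in> N" using stepD x by blast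
      have "A = x' +o N" unfolding Ax using coset_eq[OF gN] xx' by simp
      then have "A +o ((\<lambda>m. m +o N) ` M) = \<Phi> (x' +o Den F D (r + 1) p)" unfolding \<Phi>x by simp
      moreover have "x' +o Den F D (r + 1) p \<in> Eset F D (r + 1) p" unfolding Emem using x' by blast
      ultimately show "A +o ((\<lambda>m. m +o N) ` M) \<in> \<Phi> ` Eset F D (r + 1) p" by blast
    qed
    show ?thesis
      by (intro exI[of _ \<Phi>] conjI bij ballI) (simp add: \<Phi>x Im N_def)
  qed
  show ?thesis
    apply (rule exI[of _ d])
    apply (intro conjI part1 part2 part3 allI)
    apply (rule part4)
    done
qed

end
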